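(* Let $\mathbf{x}_1, \dots, \mathbf{x}_n \in [0,1]^p$ be given, with $n_0$ labeled and $n_1 = n - n_0$ unlabeled observations. For $\pi \in (0,1)$, $\alpha \in \mathbb{R}$ and a function $\eta$ on $[0,1]^p$, define the profile log-likelihood $\ell_n(\pi, \alpha, \eta)$ as \[ \sum_{i=1}^{n_0} \log\left[\frac{n_0 e^{\alpha + \eta(\mathbf{x}_i) - \tau}}{n_1\pi + (n_0 + n_1\pi) e^{\alpha + \eta(\mathbf{x}_i) - \tau}}\right] + \sum_{i=n_0+1}^n \log\left[\frac{n_1\pi + n_1\pi\, e^{\alpha + \eta(\mathbf{x}_i) - \tau}}{n_1\pi + (n_0 + n_1\pi) e^{\alpha + \eta(\mathbf{x}_i) - \tau}}\right], \] where $\tau = \log\{(1-\pi)/\pi\}$. Let $(\pi^{[r]}, \alpha^{[r]}, \eta^{[r]})$, $r = 0, 1, 2, \dots$, be the iterates of the EM-type algorithm described in the context, started from any initial values $(\pi^{[0]}, \alpha^{[0]}, \eta^{[0]})$. Then for every $r \geq 0$, \[ \ell_n(\pi^{[r]}, \alpha^{[r]}, \eta^{[r]}) \leq \ell_n(\pi^{[r+1]}, \alpha^{[r+1]}, \eta^{[r+1]}). \]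
   Context: This is the PU setting under the generalized additive exponential tilting model. Labeled $\mathbf{x}_1, \dots, \mathbf{x}_{n_0}$ are drawn from $g$. Unlabeled $\mathbf{x}_{n_0+1}, \dots, \mathbf{x}_n$ are drawn from $\pi g + (1-\pi) h$. The model is \[ g(\mathbf{x})/h(\mathbf{x}) = \omega(\mathbf{x}) = \exp\{\alpha + \eta(\mathbf{x})\}, \qquad \eta(\mathbf{x}) = \sum_{j=1}^p u_j(x_j). \] Set $y_i = 1$ for $i \le n_0$. The EM-type algorithm is as follows. At iteration $r$: (E-step) For $i = n_0+1, \dots, n$, set \[ y_i^{[r+1]} = \frac{\pi^{[r]} \exp\{\alpha^{[r]} + \eta^{[r]}(\mathbf{x}_i)\}}{\pi^{[r]} \exp\{\alpha^{[r]} + \eta^{[r]}(\mathbf{x}_i)\} + 1 - \pi^{[r]}}. \] Set $y_i^{[r+1]} = 1$ for $i \le n_0$. (M-step) Maximize, over $(\pi, \alpha, \eta)$ in the sieve space and over $\mathbf{p} = (p_1, \dots, p_n)$ with $p_i > 0$, $\sum_i p_i = 1$, $\sum_i p_i \exp\{\alpha + \eta(\mathbf{x}_i)\} = 1$, the function \[ Q^{[r+1]} = \sum_{i=1}^n \log p_i + \sum_{i=1}^{n_0} \{\alpha + \eta(\mathbf{x}_i)\} + \sum_{i=n_0+1}^n \big[y_i^{[r+1]} \log\{\pi e^{\alpha + \eta(\mathbf{x}_i)}\} + (1 - y_i^{[r+1]}) \log(1-\pi)\big]. \] This gives $\pi^{[r+1]} = n_1^{-1} \sum_{i > n_0} y_i^{[r+1]}$.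 The pair $(\alpha^{[r+1]}, \eta^{[r+1]})$ is obtained as follows. First maximize \[ \sum_{i=1}^n y_i^{[r+1]} \{\alpha_* + \eta(\mathbf{x}_i)\} - \sum_{i=1}^n \log[1 + \exp\{\alpha_* + \eta(\mathbf{x}_i)\}] \] over $(\alpha_*, \eta)$. Then set $\alpha^{[r+1]} = \alpha_*^{[r+1]} - c^{[r+1]}$, where \[ c^{[r+1]} = \log(n_0/n_1 + \pi^{[r+1]}) - \log(1 - \pi^{[r+1]}). \] The sieve space restricts $\eta = \sum_j \nu_j(x_j)$ with each $\nu_j$ a spline $\nu_j(x) = \sum_{k=1}^{K_n+m} \theta_{jk} N_k^{[m]}(x)$ in normalized B-splines of order $m$ on $[0,1]$ with $K_n$ interior knots. The coefficients satisfy $\max_k |\theta_{jk}| \le q_j$ and $\int_0^1 \nu_j = 0$. *)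

theory Defs
  imports "HOL-Analysis.Analysis"
begin

definition knot :: "nat \<Rightarrow> nat \<Rightarrow> (nat \<Rightarrow> real) \<Rightarrow> nat \<Rightarrow> real" where
  "knot m K xi k = (if k \<le> m then 0 else if k \<le> m + K then xi (k - m) else 1)"

text \<open>Normalized B-splines N_k^[d] w.r.t. a knot sequence t, via the Cox--de Boor
  recursion (0/0 = 0 convention, which Isabelle division provides).\<close>
fun bsp :: "(nat \<Rightarrow> real) \<Rightarrow> nat \<Rightarrow> nat \<Rightarrow> real \<Rightarrow> real" where
  "bsp t 0 k x = 0"
| "bsp t (Suc 0) k x =
     (if (t k \<le> x \<and> x < t (Suc k)) \<or> (t k < t (Suc k) \<and> t (Suc k) = 1 \<and> x = 1)
      then 1 else 0)"
| "bsp t (Suc (Suc d)) k x =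
     (x - t k) / (t (k + Suc d) - t k) * bsp t (Suc d) k x
     + (t (k + Suc (Suc d)) - x) / (t (k + Suc (Suc d)) - t (Suc k)) * bsp t (Suc d) (Suc k) x"

definition Bspline :: "nat \<Rightarrow> nat \<Rightarrow> (nat \<Rightarrow> real) \<Rightarrow> nat \<Rightarrow> real \<Rightarrow> real" where
  "Bspline m K xi k x = bsp (knot m K xi) m k x"

definition interior_knots :: "nat \<Rightarrow> (nat \<Rightarrow> real) \<Rightarrow> bool" where
  "interior_knots K xi \<longleftrightarrow> (\<forall>k\<in>{1..K}. 0 < xi k \<and> xi k < 1) \<and>
     (\<forall>k\<in>{1..<K}. xi k < xi (Suc k))"

definition sieve :: "nat \<Rightarrow> nat \<Rightarrow> (nat \<Rightarrow> real) \<Rightarrow> ('p::finite \<Rightarrow> real)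
                      \<Rightarrow> (real^'p \<Rightarrow> real) set" where
  "sieve m K xi q = {eta. \<exists>(\<theta>::'p \<Rightarrow> nat \<Rightarrow> real).
      (\<forall>j. \<forall>k\<in>{1..K+m}. \<bar>\<theta> j k\<bar> \<le> q j) \<and>
      (\<forall>j. integral {0..1} (\<lambda>u. \<Sum>k=1..K+m. \<theta> j k * Bspline m K xi k u) = 0) \<and>
      eta = (\<lambda>z. \<Sum>j\<in>UNIV. \<Sum>k=1..K+m. \<theta> j k * Bspline m K xi k (z $ j))}"

definition profile_loglik ::
  "nat \<Rightarrow> nat \<Rightarrow> (nat \<Rightarrow> real^'p) \<Rightarrow> real \<Rightarrow> real \<Rightarrow> (real^'p \<Rightarrow> real) \<Rightarrow> real" where
  "profile_loglik n n0 x \<pi> \<alpha> \<eta> =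
     (let \<tau> = ln ((1 - \<pi>) / \<pi>); n1 = real (n - n0);
          e = (\<lambda>i. exp (\<alpha> + \<eta> (x i) - \<tau>)) in
      (\<Sum>i=1..n0. ln (real n0 * e i / (n1 * \<pi> + (real n0 + n1 * \<pi>) * e i)))
      + (\<Sum>i=n0+1..n. ln ((n1 * \<pi> + n1 * \<pi> * e i) / (n1 * \<pi> + (real n0 + n1 * \<pi>) * e i))))"

definition estep ::
  "nat \<Rightarrow> (nat \<Rightarrow> real^'p) \<Rightarrow> real \<Rightarrow> real \<Rightarrow> (real^'p \<Rightarrow> real) \<Rightarrow> nat \<Rightarrow> real" where
  "estep n0 x \<pi> \<alpha> \<eta> i =
     (if i \<le> n0 then 1
      else \<pi> * exp (\<alpha> + \<eta> (x i)) / (\<pi> * exp (\<alpha> + \<eta> (x i)) + 1 - \<pi>))"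

definition mobj ::
  "nat \<Rightarrow> (nat \<Rightarrow> real^'p) \<Rightarrow> (nat \<Rightarrow> real) \<Rightarrow> real \<Rightarrow> (real^'p \<Rightarrow> real) \<Rightarrow> real" where
  "mobj n x y a \<eta> =
     (\<Sum>i=1..n. y i * (a + \<eta> (x i)) - ln (1 + exp (a + \<eta> (x i))))"

end

theory Submission
  imports Defs "HOL-Analysis.Analysis"
begin

lemma ring_aux: "(w::real) * (- L) + y * (a - b - L) = y * (a - b) - (w + y) * L"
  by (simp add: algebra_simps)

lemma frac_aux: "(P::real) \<noteq> 0 \<Longrightarrow> n0 * (P/D*X)/(P*Y) = n0/D*X/Y"
  by (simp add: field_simps)

lemma frac_aux2: "(q::real) \<noteq> 0 \<Longrightarrow> A/(A + q) = (A/q)/(1 + A/q)"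
  by (simp add: field_simps)

lemma em_unl:
  fixes e e' :: real assumes e: "e > 0" and e': "e' > 0"
  shows "e/(1+e) * (ln e' - ln e) \<le> ln(1+e') - ln(1+e)"
proof -
  define M where "M = (1+e')/(1+e)"
  have M: "M > 0" using e e' by (simp add: M_def)
  have h1: "ln(1/M) \<le> 1/M - 1" using M by (intro ln_le_minus_one) simp
  have h2: "ln(e'/(e*M)) \<le> e'/(e*M) - 1" using M e e' by (intro ln_le_minus_one) simp
  have w1: "1/(1+e) \<ge> 0" "e/(1+e) \<ge> 0" using e by auto
  have "1/(1+e) * ln(1/M) + e/(1+e) * ln(e'/(e*M)) \<le> 1/(1+e) * (1/M - 1) + e/(1+e) * (e'/(e*M) - 1)"
    using mult_left_mono[OF h1 w1(1)] mult_left_mono[OF h2 w1(2)] by linarith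
  also have "\<dots> = 0"
  proof -
    have a: "1+e > 0" "1+e' > 0" using e e' by auto
    have q1: "1/M - 1 = (e - e')/(1+e')" using a by (simp add: M_def field_simps)
    have q2: "e'/(e*M) - 1 = (e' - e)/(e*(1+e'))"
    proof -
      have "e*(1+e') > 0" using a e by simp
      then have "e + e*e' \<noteq> 0" by (simp add: algebra_simps)
      then show ?thesis using a e by (simp add: M_def field_simps)
    qed
    have q3: "e/(1+e) * ((e'-e)/(e*(1+e'))) = 1/(1+e) * ((e'-e)/(1+e'))" using e by simp
    show ?thesis unfolding q1 q2 q3 by (simp add: algebra_simps diff_divide_distrib)
  qed
  finally have k: "1/(1+e) * ln(1/M) + e/(1+e) * ln(e'/(e*M)) \<le> 0" .
  have l1: "ln(1/M) = - ln M" using M by (simp add: ln_div)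
  have l2: "ln(e'/(e*M)) = ln e' - ln e - ln M" using M e e' by (simp add: ln_div ln_mult)
  have lM: "ln M = ln(1+e') - ln(1+e)" using e e' by (simp add: M_def ln_div)
  have "1/(1+e) * ln(1/M) + e/(1+e) * ln(e'/(e*M)) = e/(1+e) * (ln e' - ln e) - ln M"
  proof -
    have s1: "1/(1+e) + e/(1+e) = 1" using e by (simp add: add_divide_distrib[symmetric])
    have "1/(1+e) * ln(1/M) + e/(1+e) * ln(e'/(e*M)) = e/(1+e) * (ln e' - ln e) - (1/(1+e) + e/(1+e)) * ln M"
      unfolding l1 l2 by (rule ring_aux)
    then show ?thesis unfolding s1 by simp
  qed
  with k lM show ?thesis by linarith
qed

lemma gibbs:
  fixes N S b :: real assumes N: "N > 0" and S: "S > 0" and b: "0 < b" "b < 1"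
  shows "N * ln(1-b) + S * ln b \<le> N * ln(1 - S/(N+S)) + S * ln(S/(N+S))"
proof -
  define b' where "b' = S/(N+S)"
  have b': "0 < b'" "b' < 1" using N S by (auto simp: b'_def)
  have h1: "ln((1-b)/(1-b')) \<le> (1-b)/(1-b') - 1" using b b' by (intro ln_le_minus_one) simp
  have h2: "ln(b/b') \<le> b/b' - 1" using b b' by (intro ln_le_minus_one) simp
  have "N * ln((1-b)/(1-b')) + S * ln(b/b') \<le> N * ((1-b)/(1-b') - 1) + S * (b/b' - 1)"
    using mult_left_mono[OF h1, of N] mult_left_mono[OF h2, of S] N S by linarith
  also have "\<dots> = 0" using N S b' by (simp add: b'_def field_simps)
  finally have "N * ln((1-b)/(1-b')) + S * ln(b/b') \<le> 0" .
  moreover have "ln((1-b)/(1-b')) = ln(1-b) - ln(1-b')" "ln(b/b') = ln b - ln b'"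
    using b b' by (simp_all add: ln_div)
  ultimately show ?thesis unfolding b'_def[symmetric] by (simp add: algebra_simps)
qed

lemma profile_alg:
  fixes n0 n1 p s :: real
  assumes n0: "n0 > 0" and n1: "n1 > 0" and p: "0 < p" "p < 1"
  defines "b \<equiv> n1*p/(n0+n1*p)" and "c \<equiv> ln (n0/n1 + p) - ln (1-p)"
  shows "exp (s - ln ((1-p)/p)) = b * exp (s + c)"
    and "ln (n0 * exp (s - ln ((1-p)/p)) / (n1*p + (n0+n1*p) * exp (s - ln ((1-p)/p))))
         = ln (1-b) + (s + c) - ln (1 + exp (s + c))"
    and "ln ((n1*p + n1*p * exp (s - ln ((1-p)/p))) / (n1*p + (n0+n1*p) * exp (s - ln ((1-p)/p))))
         = ln (1 + exp (s - ln ((1-p)/p))) - ln (1 + exp (s + c))"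
    and "p * exp s / (p * exp s + 1 - p) = exp (s - ln ((1-p)/p)) / (1 + exp (s - ln ((1-p)/p)))"
proof -
  have q: "n0/n1 + p > 0" "1 - p > 0" using n0 n1 p by (auto intro!: add_pos_pos divide_pos_pos)
  have E: "exp (s - ln ((1-p)/p)) = exp s * p / (1-p)"
    using p by (simp add: exp_diff)
  have C: "exp (s + c) = exp s * (n0/n1+p) / (1-p)"
    using q by (simp add: c_def exp_add exp_diff)
  show 1: "exp (s - ln ((1-p)/p)) = b * exp (s + c)"
  proof -
    have nn: "n0/n1+p = (n0+n1*p)/n1" using n1 by (simp add: field_simps)
    have "b * (n0/n1+p) = p" 
    proof -
      have "n0 + n1*p > 0" using n0 n1 p by (intro add_pos_pos mult_pos_pos) simp_all
      then show ?thesis unfolding nn b_def using n1 by simp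
    qed
    then show ?thesis unfolding E C by (metis times_divide_eq_right mult.commute mult.left_commute)
  qed
  define X where "X = exp (s + c)"
  have X: "X > 0" by (simp add: X_def)
  have pos: "n0 + n1*p > 0" "n1*p > 0" using n0 n1 p by (intro add_pos_pos mult_pos_pos; simp)+
  have b: "0 < b" "b < 1" using n0 pos by (auto simp: b_def)
  have bD: "(n0+n1*p)*(b*X) = (n1*p)*X" using pos by (simp add: b_def)
  have b1: "1-b = n0/(n0+n1*p)" using pos by (simp add: b_def field_simps)
  have "n0 * (b*X) / (n1*p + (n0+n1*p) * (b*X)) = n0 * (b*X) / ((n1*p)*(1+X))"
    unfolding bD by (simp add: algebra_simps)
  also have "\<dots> = (1-b) * X / (1+X)"
  proof -
    have "1+X > 0" using X by simp
    then show ?thesis unfolding b1 unfolding b_def using pos by (intro frac_aux) auto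
  qed
  finally have "n0 * (b*X) / (n1*p + (n0+n1*p) * (b*X)) = (1-b) * X / (1+X)" .
  then show "ln (n0 * exp (s - ln ((1-p)/p)) / (n1*p + (n0+n1*p) * exp (s - ln ((1-p)/p))))
         = ln (1-b) + (s + c) - ln (1 + exp (s + c))"
  proof -
    have lX: "ln X = s + c" by (simp add: X_def)
    have X1: "1 + X > 0" using X by simp
    assume h: "n0 * (b*X) / (n1*p + (n0+n1*p) * (b*X)) = (1-b) * X / (1+X)"
    show ?thesis unfolding 1 X_def[symmetric] h using b X X1 by (simp add: ln_div ln_mult lX)
  qed
  have "(n1*p + n1*p * (b*X)) / (n1*p + (n0+n1*p) * (b*X)) = ((n1*p)*(1 + b*X)) / ((n1*p)*(1+X))"
    unfolding bD by (simp add: algebra_simps)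
  also have "\<dots> = (1 + b*X) / (1+X)" using pos n1 p by simp
  finally have "(n1*p + n1*p * (b*X)) / (n1*p + (n0+n1*p) * (b*X)) = (1 + b*X) / (1+X)" .
  then show "ln ((n1*p + n1*p * exp (s - ln ((1-p)/p))) / (n1*p + (n0+n1*p) * exp (s - ln ((1-p)/p))))
         = ln (1 + exp (s - ln ((1-p)/p))) - ln (1 + exp (s + c))"
  proof -
    have "b*X > 0" using b X by simp
    then have "1 + b*X > 0" by simp
    moreover assume "(n1*p + n1*p * (b*X)) / (n1*p + (n0+n1*p) * (b*X)) = (1 + b*X) / (1+X)"
    ultimately show ?thesis unfolding 1 X_def[symmetric] using X by (simp add: ln_div)
  qed
  show "p * exp s / (p * exp s + 1 - p) = exp (s - ln ((1-p)/p)) / (1 + exp (s - ln ((1-p)/p)))"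
  proof -
    have "p * exp s + 1 - p = p * exp s + (1-p)" by simp
    moreover have "(1::real) - p \<noteq> 0" using p by simp
    ultimately have "p * exp s / (p * exp s + 1 - p) = (p * exp s/(1-p))/(1 + p * exp s/(1-p))"
      using frac_aux2[of "1-p" "p * exp s"] by metis
    then show ?thesis unfolding E by (simp add: mult.commute)
  qed
qed


lemma sum_split_ivl:
  fixes f :: "nat \<Rightarrow> real" assumes "n0 \<le> n"
  shows "sum f {1..n} = sum f {1..n0} + sum f {n0+1..n}"
proof -
  have "{1..n} = {1..n0} \<union> {n0+1..n}" using assms by auto
  moreover have "{1..n0} \<inter> {n0+1..n} = {}" by auto
  ultimately show ?thesis by (simp add: sum.union_disjoint)
qed

lemma em_step:
  fixes x :: "nat \<Rightarrow> real^'p::finite" and \<eta> \<eta>' :: "real^'p \<Rightarrow> real"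
    and \<pi> \<alpha> a :: real and n n0 :: nat
  assumes n0: "0 < n0" and nn: "n0 < n" and p: "0 < \<pi>" "\<pi> < 1"
  defines "y \<equiv> estep n0 x \<pi> \<alpha> \<eta>"
  defines "\<pi>' \<equiv> (\<Sum>i=n0+1..n. y i) / real (n - n0)"
  defines "c \<equiv> ln (real n0 / real (n - n0) + \<pi>) - ln (1 - \<pi>)"
  defines "\<alpha>' \<equiv> a - (ln (real n0 / real (n - n0) + \<pi>') - ln (1 - \<pi>'))"
  assumes opt: "mobj n x y (\<alpha> + c) \<eta> \<le> mobj n x y a \<eta>'"
  shows "0 < \<pi>' \<and> \<pi>' < 1 \<and> profile_loglik n n0 x \<pi> \<alpha> \<eta> \<le> profile_loglik n n0 x \<pi>' \<alpha>' \<eta>'"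
proof -
  define N0 where "N0 = real n0"
  define N1 where "N1 = real (n - n0)"
  have N0: "N0 > 0" using n0 by (simp add: N0_def)
  have N1: "N1 > 0" using nn by (simp add: N1_def)
  define S where "S = (\<Sum>i=n0+1..n. y i)"
  define e where "e i = exp (\<alpha> + \<eta> (x i) - ln ((1-\<pi>)/\<pi>))" for i
  define t where "t i = \<alpha> + \<eta> (x i) + c" for i
  define b where "b = N1*\<pi>/(N0+N1*\<pi>)"
  have yU: "y i = e i / (1 + e i)" if "n0 < i" for i
    using that profile_alg(4)[OF N0 N1 p, of "\<alpha> + \<eta> (x i)"]
    by (simp add: y_def estep_def e_def)
  have yL: "y i = 1" if "i \<le> n0" for i using that by (simp add: y_def estep_def)
  have epos: "e i > 0" for i by (simp add: e_def)
  have y01: "0 < y i \<and> y i < 1" if "n0 < i" for i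
    using yU[OF that] epos[of i] by (simp add: divide_less_eq)
  have Spos: "S > 0" unfolding S_def
    using nn y01 by (intro sum_pos) auto
  have SN1: "S < N1"
  proof -
    have "S < (\<Sum>i=n0+1..n. 1)" unfolding S_def
      using nn y01 by (intro sum_strict_mono) auto
    then show ?thesis by (simp add: N1_def)
  qed
  have pi': "\<pi>' = S / N1" by (simp add: \<pi>'_def S_def N1_def)
  have p': "0 < \<pi>'" "\<pi>' < 1" using Spos SN1 N1 by (simp_all add: pi')
  define c' where "c' = ln (N0/N1 + \<pi>') - ln (1 - \<pi>')"
  define b' where "b' = N1*\<pi>'/(N0+N1*\<pi>')"
  define e' where "e' i = exp (\<alpha>' + \<eta>' (x i) - ln ((1-\<pi>')/\<pi>'))" for i
  define t' where "t' i = \<alpha>' + \<eta>' (x i) + c'" for i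
  have t'a: "t' i = a + \<eta>' (x i)" for i
    by (simp add: t'_def \<alpha>'_def c'_def N0_def N1_def)
  have c_eq: "c = ln (N0/N1 + \<pi>) - ln (1 - \<pi>)" by (simp add: c_def N0_def N1_def)
  note A = profile_alg[OF N0 N1 p, folded b_def c_eq]
  note A' = profile_alg[OF N0 N1 p', folded b'_def c'_def]
  have PL: "profile_loglik n n0 x \<pi> \<alpha> \<eta> = (\<Sum>i=1..n0. ln(1-b) + t i - ln(1+exp(t i)))
      + (\<Sum>i=n0+1..n. ln(1+e i) - ln(1+exp(t i)))"
    unfolding profile_loglik_def Let_def N0_def[symmetric] N1_def[symmetric]
    by (intro arg_cong2[where f="(+)"] sum.cong refl)
       (simp_all add: A(2) A(3) t_def e_def)
  have PL': "profile_loglik n n0 x \<pi>' \<alpha>' \<eta>' = (\<Sum>i=1..n0. ln(1-b') + t' i - ln(1+exp(t' i)))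
      + (\<Sum>i=n0+1..n. ln(1+e' i) - ln(1+exp(t' i)))"
    unfolding profile_loglik_def Let_def N0_def[symmetric] N1_def[symmetric]
    by (intro arg_cong2[where f="(+)"] sum.cong refl)
       (simp_all add: A'(2) A'(3) t'_def e'_def)
  have eb: "e i = b * exp (t i)" for i unfolding e_def t_def by (rule A(1))
  have eb': "e' i = b' * exp (t' i)" for i unfolding e'_def t'_def by (rule A'(1))
  have pp: "N1*\<pi> > 0" using N1 p by simp
  have b: "0 < b" "b < 1" using N0 pp by (auto simp: b_def divide_less_eq)
  have b'S: "b' = S/(N0+S)" using N1 by (simp add: b'_def pi')
  have b': "0 < b'" "b' < 1" using N0 Spos by (auto simp: b'S)
  define D where "D i = y i * (t' i - t i) - (ln(1+exp(t' i)) - ln(1+exp(t i)))" for i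
  have M: "mobj n x y a \<eta>' - mobj n x y (\<alpha> + c) \<eta> = (\<Sum>i=1..n. D i)"
    unfolding mobj_def D_def sum_subtractf[symmetric]
    by (intro sum.cong refl) (simp add: t'a t_def algebra_simps)
  have Dsplit: "(\<Sum>i=1..n. D i) = (\<Sum>i=1..n0. D i) + (\<Sum>i=n0+1..n. D i)"
    using nn by (intro sum_split_ivl) simp
  have L: "(\<Sum>i=1..n0. ln(1-b') + t' i - ln(1+exp(t' i))) - (\<Sum>i=1..n0. ln(1-b) + t i - ln(1+exp(t i)))
     = N0 * (ln(1-b') - ln(1-b)) + (\<Sum>i=1..n0. D i)"
  proof -
    have "(\<Sum>i=1..n0. ln(1-b') + t' i - ln(1+exp(t' i))) - (\<Sum>i=1..n0. ln(1-b) + t i - ln(1+exp(t i)))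
      = (\<Sum>i=1..n0. (ln(1-b') - ln(1-b)) + D i)"
      unfolding sum_subtractf[symmetric] D_def by (intro sum.cong refl) (simp add: yL algebra_simps)
    also have "\<dots> = N0 * (ln(1-b') - ln(1-b)) + (\<Sum>i=1..n0. D i)"
      by (simp add: sum.distrib N0_def)
    finally show ?thesis .
  qed
  have U: "(\<Sum>i=n0+1..n. ln(1+e' i) - ln(1+exp(t' i))) - (\<Sum>i=n0+1..n. ln(1+e i) - ln(1+exp(t i)))
     \<ge> S * (ln b' - ln b) + (\<Sum>i=n0+1..n. D i)"
  proof -
    have "(\<Sum>i=n0+1..n. ln(1+e' i) - ln(1+exp(t' i))) - (\<Sum>i=n0+1..n. ln(1+e i) - ln(1+exp(t i)))
      = (\<Sum>i=n0+1..n. (ln(1+e' i) - ln(1+exp(t' i))) - (ln(1+e i) - ln(1+exp(t i))))"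
      by (simp add: sum_subtractf)
    also have "\<dots> \<ge> (\<Sum>i=n0+1..n. y i * (ln b' - ln b) + D i)"
    proof (intro sum_mono)
      fix i assume i: "i \<in> {n0+1..n}"
      then have "n0 < i" by simp
      have e'pos: "e' i > 0" using eb' b' by simp
      have k: "y i * (ln (e' i) - ln (e i)) \<le> ln(1+e' i) - ln(1+e i)"
        unfolding yU[OF \<open>n0 < i\<close>] by (rule em_unl[OF epos e'pos])
      have "ln (e' i) - ln (e i) = (ln b' - ln b) + (t' i - t i)"
        using b b' by (simp add: eb eb' ln_mult)
      with k show "y i * (ln b' - ln b) + D i \<le> (ln(1+e' i) - ln(1+exp(t' i))) - (ln(1+e i) - ln(1+exp(t i)))"
        by (simp add: D_def algebra_simps)
    qed
    also have "(\<Sum>i=n0+1..n. y i * (ln b' - ln b) + D i) = S * (ln b' - ln b) + (\<Sum>i=n0+1..n. D i)"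
      by (simp add: sum.distrib S_def sum_distrib_right)
    finally show ?thesis .
  qed
  have G: "N0 * ln(1-b) + S * ln b \<le> N0 * ln(1-b') + S * ln b'"
    unfolding b'S by (rule gibbs[OF N0 Spos b])
  have "profile_loglik n n0 x \<pi> \<alpha> \<eta> \<le> profile_loglik n n0 x \<pi>' \<alpha>' \<eta>'"
    unfolding PL PL' using L U G M Dsplit opt by (simp add: algebra_simps)
  then show ?thesis using p' by simp
qed

theorem proposition2:
  fixes n n0 m K :: nat
    and x :: "nat \<Rightarrow> real^'p::finite"
    and xi :: "nat \<Rightarrow> real" and q :: "'p \<Rightarrow> real"
    and \<pi>r \<alpha>r :: "nat \<Rightarrow> real" and \<eta>r :: "nat \<Rightarrow> real^'p \<Rightarrow> real"
  assumes n0_pos: "0 < n0" and n0_lt: "n0 < n"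
    and x_unit: "\<forall>i\<in>{1..n}. \<forall>j. 0 \<le> x i $ j \<and> x i $ j \<le> 1"
    and m_pos: "1 \<le> m"
    and knots: "interior_knots K xi"
    and init_pi: "0 < \<pi>r 0 \<and> \<pi>r 0 < 1"
    and init_eta: "\<eta>r 0 \<in> sieve m K xi q"
    and pi_step: "\<forall>r. \<pi>r (Suc r) =
        (\<Sum>i=n0+1..n. estep n0 x (\<pi>r r) (\<alpha>r r) (\<eta>r r) i) / real (n - n0)"
    and am_step: "\<forall>r. \<exists>a. \<eta>r (Suc r) \<in> sieve m K xi q \<and>
        (\<forall>a'. \<forall>\<eta>'\<in>sieve m K xi q.
            mobj n x (estep n0 x (\<pi>r r) (\<alpha>r r) (\<eta>r r)) a' \<eta>'
            \<le> mobj n x (estep n0 x (\<pi>r r) (\<alpha>r r) (\<eta>r r)) a (\<eta>r (Suc r))) \<and>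
        \<alpha>r (Suc r) = a - (ln (real n0 / real (n - n0) + \<pi>r (Suc r)) - ln (1 - \<pi>r (Suc r)))"
  shows "\<forall>r. profile_loglik n n0 x (\<pi>r r) (\<alpha>r r) (\<eta>r r)
             \<le> profile_loglik n n0 x (\<pi>r (Suc r)) (\<alpha>r (Suc r)) (\<eta>r (Suc r))"
proof -
  have step: "0 < \<pi>r (Suc r) \<and> \<pi>r (Suc r) < 1 \<and>
      profile_loglik n n0 x (\<pi>r r) (\<alpha>r r) (\<eta>r r)
             \<le> profile_loglik n n0 x (\<pi>r (Suc r)) (\<alpha>r (Suc r)) (\<eta>r (Suc r))"
    if p: "0 < \<pi>r r" "\<pi>r r < 1" and s: "\<eta>r r \<in> sieve m K xi q" for r
  proof -
    from am_step obtain a where a: "\<eta>r (Suc r) \<in> sieve m K xi q"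
      "\<forall>a'. \<forall>\<eta>'\<in>sieve m K xi q.
            mobj n x (estep n0 x (\<pi>r r) (\<alpha>r r) (\<eta>r r)) a' \<eta>'
            \<le> mobj n x (estep n0 x (\<pi>r r) (\<alpha>r r) (\<eta>r r)) a (\<eta>r (Suc r))"
      "\<alpha>r (Suc r) = a - (ln (real n0 / real (n - n0) + \<pi>r (Suc r)) - ln (1 - \<pi>r (Suc r)))"
      by blast
    have opt: "mobj n x (estep n0 x (\<pi>r r) (\<alpha>r r) (\<eta>r r))
        (\<alpha>r r + (ln (real n0 / real (n - n0) + \<pi>r r) - ln (1 - \<pi>r r))) (\<eta>r r)
       \<le> mobj n x (estep n0 x (\<pi>r r) (\<alpha>r r) (\<eta>r r)) a (\<eta>r (Suc r))"
      using a(2) s by blast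
    have "0 < \<pi>r (Suc r) \<and> \<pi>r (Suc r) < 1 \<and>
      profile_loglik n n0 x (\<pi>r r) (\<alpha>r r) (\<eta>r r)
             \<le> profile_loglik n n0 x (\<pi>r (Suc r)) (a - (ln (real n0 / real (n - n0) + \<pi>r (Suc r)) - ln (1 - \<pi>r (Suc r)))) (\<eta>r (Suc r))"
      unfolding pi_step[rule_format]
      by (rule em_step[OF n0_pos n0_lt p opt])
    then show ?thesis using a(3) by simp
  qed
  have inv: "0 < \<pi>r r \<and> \<pi>r r < 1 \<and> \<eta>r r \<in> sieve m K xi q" for r
  proof (induction r)
    case 0 then show ?case using init_pi init_eta by simp
  next
    case (Suc r)
    then show ?case using step[of r] am_step by blast
  qed
  show ?thesis using step inv by blast
qed

end
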